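(* Let $G=(V,E)$ be a connected graph and let $\Gamma(G)=\{G_\pi:\ \pi:E\to\{\pm1\},\ \rho(G_\pi)<\rho(G)\}$. Then $\Gamma(G)$ is empty if and only if $G$ is a tree or a unicyclic graph whose unique cycle has odd length.
   Context: All graphs are finite, simple and undirected. A signed graph $G_\pi$ is a pair $(G,\pi)$ with $\pi:E\to\{+1,-1\}$; its adjacency matrix has entry $\pi(\{i,j\})$ for adjacent $i,j$ and $0$ otherwise, and its eigenvalues are those of this symmetric matrix. $\rho(G_\pi)$ denotes the largest modulus of an eigenvalue of $G_\pi$, and $\rho(G)$ the spectral radius of the adjacency matrix of $G$. *)

theory Defs
  imports "HOL-Analysis.Analysis"
begin

definition simple_graph :: "('n \<Rightarrow> 'n \<Rightarrow> bool) \<Rightarrow> bool" where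
  "simple_graph adj \<longleftrightarrow> (\<forall>i j. adj i j \<longrightarrow> adj j i) \<and> (\<forall>i. \<not> adj i i)"

definition graph_connected :: "('n \<Rightarrow> 'n \<Rightarrow> bool) \<Rightarrow> bool" where
  "graph_connected adj \<longleftrightarrow> (\<forall>u v. adj\<^sup>*\<^sup>* u v)"

definition graph_edges :: "('n \<Rightarrow> 'n \<Rightarrow> bool) \<Rightarrow> 'n set set" where
  "graph_edges adj = {{i, j} | i j. adj i j}"

definition is_cycle :: "('n \<Rightarrow> 'n \<Rightarrow> bool) \<Rightarrow> 'n list \<Rightarrow> bool" where
  "is_cycle adj c \<longleftrightarrow> length c \<ge> 3 \<and> distinct c \<and>
     (\<forall>i < length c. adj (c ! i) (c ! ((i + 1) mod length c)))"

definition cycle_edge_set :: "'n list \<Rightarrow> 'n set set" where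
  "cycle_edge_set c = {{c ! i, c ! ((i + 1) mod length c)} | i. i < length c}"

text \<open>The cycles of the graph, identified as subgraphs via their edge sets.\<close>
definition graph_cycles :: "('n \<Rightarrow> 'n \<Rightarrow> bool) \<Rightarrow> 'n set set set" where
  "graph_cycles adj = {cycle_edge_set c | c. is_cycle adj c}"

definition is_tree :: "('n \<Rightarrow> 'n \<Rightarrow> bool) \<Rightarrow> bool" where
  "is_tree adj \<longleftrightarrow> graph_connected adj \<and> graph_cycles adj = {}"

definition odd_unicyclic :: "('n \<Rightarrow> 'n \<Rightarrow> bool) \<Rightarrow> bool" where
  "odd_unicyclic adj \<longleftrightarrow> graph_connected adj \<and>
     (\<exists>C. graph_cycles adj = {C} \<and> odd (card C))"

definition adj_matrix :: "('n::finite \<Rightarrow> 'n \<Rightarrow> bool) \<Rightarrow> real^'n^'n" where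
  "adj_matrix adj = (\<chi> i j. if adj i j then 1 else 0)"

text \<open>A signature pi : E -> {+1,-1}, represented as a function on 2-sets whose
  values on edges lie in {1,-1} (values off edges are irrelevant).\<close>
definition is_signature :: "('n \<Rightarrow> 'n \<Rightarrow> bool) \<Rightarrow> ('n set \<Rightarrow> real) \<Rightarrow> bool" where
  "is_signature adj \<pi> \<longleftrightarrow> (\<forall>e \<in> graph_edges adj. \<pi> e = 1 \<or> \<pi> e = -1)"

definition signed_adj_matrix :: "('n::finite \<Rightarrow> 'n \<Rightarrow> bool) \<Rightarrow> ('n set \<Rightarrow> real) \<Rightarrow> real^'n^'n" where
  "signed_adj_matrix adj \<pi> = (\<chi> i j. if adj i j then \<pi> {i, j} else 0)"

text \<open>Eigenvalues of a real matrix (real, which covers all eigenvalues for symmetric matrices).\<close>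
definition is_eigenvalue :: "real^'n^'n \<Rightarrow> real \<Rightarrow> bool" where
  "is_eigenvalue A mu \<longleftrightarrow> (\<exists>v. v \<noteq> 0 \<and> A *v v = mu *\<^sub>R v)"

definition spec_rad :: "real^'n^'n \<Rightarrow> real" where
  "spec_rad A = Max (abs ` {mu. is_eigenvalue A mu})"

end

theory Submission
  imports Defs
begin


definition symm :: "real^'n^'n \<Rightarrow> bool" where
  "symm M \<longleftrightarrow> (\<forall>i j. M$i$j = M$j$i)"

lemma symm_inner:
  fixes M :: "real^'n^'n"
  assumes "symm M"
  shows "(M *v x) \<bullet> y = x \<bullet> (M *v y)"
proof -
  have "(M *v x) \<bullet> y = (\<Sum>i\<in>UNIV. \<Sum>j\<in>UNIV. M$i$j * x$j * y$i)"
    by (simp add: inner_vec_def matrix_vector_mult_def sum_distrib_right)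
  also have "\<dots> = (\<Sum>j\<in>UNIV. \<Sum>i\<in>UNIV. M$i$j * x$j * y$i)" by (rule sum.swap)
  also have "\<dots> = x \<bullet> (M *v y)"
    using assms by (simp add: inner_vec_def matrix_vector_mult_def sum_distrib_left symm_def mult_ac)
  finally show ?thesis .
qed

lemma perturb:
  fixes M :: "real^'n^'n"
  assumes "symm M" and le: "\<And>z. z \<bullet> (M *v z) \<le> l * (z \<bullet> z)"
    and eq: "y \<bullet> (M *v y) = l * (y \<bullet> y)"
  shows "M *v y = l *\<^sub>R y"
proof -
  define w where "w = M *v y - l *\<^sub>R y"
  define K where "K = l * (w \<bullet> w) - w \<bullet> (M *v w)"
  have wMy: "w \<bullet> (M *v y) - l * (y \<bullet> w) = w \<bullet> w"
    by (simp add: w_def inner_diff_left inner_diff_right inner_commute algebra_simps)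
  have yw: "w \<bullet> y = y \<bullet> w" by (rule inner_commute)
  have e1: "y \<bullet> (M *v w) = w \<bullet> (M *v y)"
    using symm_inner[OF assms(1), of w y] by (simp add: inner_commute)
  have key: "2 * t * (w \<bullet> w) \<le> t^2 * K" for t :: real
  proof -
    have le1: "(y + t *\<^sub>R w) \<bullet> (M *v (y + t *\<^sub>R w)) \<le> l * ((y + t *\<^sub>R w) \<bullet> (y + t *\<^sub>R w))"
      by (rule le)
    have E1: "(y + t *\<^sub>R w) \<bullet> (M *v (y + t *\<^sub>R w)) =
       l * (y \<bullet> y) + 2 * t * (w \<bullet> w) + 2 * t * l * (y \<bullet> w) + t^2 * (w \<bullet> (M *v w))"
      using e1 wMy eq
      by (simp add: algebra_simps inner_add_left inner_add_right power2_eq_square)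
    have E2: "(y + t *\<^sub>R w) \<bullet> (y + t *\<^sub>R w) = y \<bullet> y + 2 * t * (y \<bullet> w) + t^2 * (w \<bullet> w)"
      using yw by (simp add: algebra_simps inner_add_left inner_add_right power2_eq_square)
    have "l * (y \<bullet> y) + 2 * t * (w \<bullet> w) + 2 * t * l * (y \<bullet> w) + t^2 * (w \<bullet> (M *v w))
       \<le> l * (y \<bullet> y) + 2 * t * l * (y \<bullet> w) + t^2 * (l * (w \<bullet> w))"
      using le1 unfolding E1 E2 by (simp add: algebra_simps)
    thus ?thesis unfolding K_def by (simp add: algebra_simps)
  qed
  have "w \<bullet> w = 0"
  proof (rule ccontr)
    assume "w \<bullet> w \<noteq> 0"
    hence a: "w \<bullet> w > 0" by (metis inner_ge_zero order_le_less)
    define t where "t = (w \<bullet> w) / (\<bar>K\<bar> + 1)"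
    have t: "t > 0" using a by (simp add: t_def)
    have "2 * t * (w \<bullet> w) \<le> t * (t * K)" using key[of t] by (simp add: power2_eq_square mult_ac)
    hence "2 * (w \<bullet> w) \<le> t * K" using t by simp
    also have "\<dots> \<le> t * \<bar>K\<bar>" using t by (simp add: mult_left_mono)
    also have "\<dots> < w \<bullet> w" unfolding t_def using a
      by (simp add: field_simps)
    finally show False using a by simp
  qed
  thus ?thesis by (simp add: w_def)
qed

lemma rayleigh_max:
  fixes M :: "real^'n^'n"
  assumes "symm M"
  shows "\<exists>l x. x \<noteq> 0 \<and> M *v x = l *\<^sub>R x \<and> (\<forall>z. z \<bullet> (M *v z) \<le> l * (z \<bullet> z))"
proof -
  have "\<exists>x\<in>sphere 0 1. \<forall>y\<in>sphere 0 1. (\<lambda>y. y \<bullet> (M *v y)) y \<le> (\<lambda>y. y \<bullet> (M *v y)) x"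
    by (rule continuous_attains_sup) (auto intro!: continuous_intros)
  then obtain x :: "real^'n" where x: "norm x = 1" and mx: "\<And>y. norm y = 1 \<Longrightarrow> y \<bullet> (M *v y) \<le> x \<bullet> (M *v x)"
    by auto
  define l where "l = x \<bullet> (M *v x)"
  have le: "z \<bullet> (M *v z) \<le> l * (z \<bullet> z)" for z
  proof (cases "z = 0")
    case True thus ?thesis by simp
  next
    case False
    define y where "y = (1 / norm z) *\<^sub>R z"
    have "norm y = 1" using False by (simp add: y_def)
    hence "y \<bullet> (M *v y) \<le> l" using mx l_def by simp
    moreover have "y \<bullet> (M *v y) = (z \<bullet> (M *v z)) / (z \<bullet> z)"
      using False by (simp add: y_def matrix_vector_mult_scaleR power2_norm_eq_inner[symmetric] power2_eq_square)
    ultimately show ?thesis using False by (simp add: divide_le_eq)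
  qed
  have xx: "x \<bullet> x = 1" using x by (simp add: power2_norm_eq_inner[symmetric])
  have "M *v x = l *\<^sub>R x" by (rule perturb[OF assms le]) (simp add: l_def xx)
  moreover have "x \<noteq> 0" using x by auto
  ultimately show ?thesis using le by blast
qed

lemma eig_finite:
  fixes M :: "real^'n^'n"
  assumes "symm M"
  shows "finite {mu. is_eigenvalue M mu}"
proof -
  define S where "S = {mu. is_eigenvalue M mu}"
  define f where "f mu = (SOME v. v \<noteq> 0 \<and> M *v v = mu *\<^sub>R v)" for mu
  have f: "f mu \<noteq> 0 \<and> M *v f mu = mu *\<^sub>R f mu" if "mu \<in> S" for mu
  proof -
    have "\<exists>v. v \<noteq> 0 \<and> M *v v = mu *\<^sub>R v" using that by (simp add: S_def is_eigenvalue_def)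
    thus ?thesis unfolding f_def by (rule someI_ex)
  qed
  have orth: "f a \<bullet> f b = 0" if "a \<in> S" "b \<in> S" "a \<noteq> b" for a b
  proof -
    have "a * (f a \<bullet> f b) = (M *v f a) \<bullet> f b" using f[OF that(1)] by simp
    also have "\<dots> = f a \<bullet> (M *v f b)" by (rule symm_inner[OF assms])
    also have "\<dots> = b * (f a \<bullet> f b)" using f[OF that(2)] by simp
    finally show ?thesis using that(3) by simp
  qed
  have inj: "inj_on f S"
  proof (rule inj_onI)
    fix a b assume ab: "a \<in> S" "b \<in> S" "f a = f b"
    show "a = b"
    proof (rule ccontr)
      assume "a \<noteq> b"
      hence "f a \<bullet> f a = 0" using orth[OF ab(1,2)] ab(3) by simp
      thus False using f[OF ab(1)] by simp
    qed
  qed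
  have "independent (f ` S)"
    apply (rule pairwise_orthogonal_independent)
    using orth f by (auto simp: pairwise_def orthogonal_def)
  hence "finite (f ` S)" using independent_bound by blast
  thus ?thesis using inj finite_imageD S_def by blast
qed



lemma adj_nth[simp]: "adj_matrix adj $ i $ j = (if adj i j then 1 else 0)"
  by (simp add: adj_matrix_def)

lemma sadj_nth[simp]: "signed_adj_matrix adj p $ i $ j = (if adj i j then p {i, j} else 0)"
  by (simp add: signed_adj_matrix_def)

lemma symm_adj: "simple_graph adj \<Longrightarrow> symm (adj_matrix adj)"
  by (auto simp: symm_def simple_graph_def)

lemma symm_sadj: "simple_graph adj \<Longrightarrow> symm (signed_adj_matrix adj p)"
  by (auto simp: symm_def simple_graph_def insert_commute)

lemma sum_abs_eq_sign:
  fixes f :: "'a \<Rightarrow> real"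
  assumes "finite S" "\<bar>sum f S\<bar> = (\<Sum>x\<in>S. \<bar>f x\<bar>)" "x \<in> S"
  shows "f x * sum f S \<ge> 0"
proof (cases "sum f S \<ge> 0")
  case True
  hence "(\<Sum>x\<in>S. \<bar>f x\<bar> - f x) = 0" using assms(2) by (simp add: sum_subtractf)
  hence "\<bar>f x\<bar> - f x = 0" using sum_nonneg_eq_0_iff[OF assms(1), of "\<lambda>y. \<bar>f y\<bar> - f y"] assms(3) by auto
  hence "f x \<ge> 0" by (metis abs_ge_zero eq_iff_diff_eq_0)
  thus ?thesis using True by simp
next
  case False
  hence "(\<Sum>x\<in>S. \<bar>f x\<bar> + f x) = 0" using assms(2) by (simp add: sum.distrib)
  hence "\<bar>f x\<bar> + f x = 0" using sum_nonneg_eq_0_iff[OF assms(1), of "\<lambda>y. \<bar>f y\<bar> + f y"] assms(3) by auto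
  hence "f x \<le> 0" by linarith
  thus ?thesis using False by (simp add: mult_nonpos_nonpos)
qed

lemma sign_lemma:
  fixes x a b m :: real
  assumes "x = 1 \<or> x = -1" "a \<noteq> 0" "b \<noteq> 0" "m \<noteq> 0" "x * b * (m * a) \<ge> 0"
  shows "x = sgn m * (sgn a * sgn b)"
proof -
  have "x * b * (m * a) \<noteq> 0" using assms by auto
  hence "sgn (x * b * (m * a)) = 1" using assms(5) by (simp add: sgn_real_def)
  hence "sgn x * sgn b * (sgn m * sgn a) = 1" by (simp add: sgn_mult)
  moreover have "sgn x = x" using assms(1) by auto
  moreover have "sgn a = 1 \<or> sgn a = -1" "sgn b = 1 \<or> sgn b = -1" "sgn m = 1 \<or> sgn m = -1"
    using assms by (auto simp: sgn_real_def)
  ultimately show ?thesis using assms(1) by auto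
qed

lemma strict:
  fixes adj :: "'n::finite \<Rightarrow> 'n \<Rightarrow> bool"
  assumes sg: "simple_graph adj" and conn: "graph_connected adj" and sig: "is_signature adj p"
    and edge: "adj i0 j0"
    and lmax: "\<And>z. z \<bullet> (adj_matrix adj *v z) \<le> l * (z \<bullet> z)"
    and v0: "v \<noteq> 0" and ev: "signed_adj_matrix adj p *v v = mu *\<^sub>R v"
    and nb: "\<not> (\<exists>s c. (\<forall>x. s x = 1 \<or> s x = -1) \<and> (c = 1 \<or> c = -1) \<and>
                  (\<forall>i j. adj i j \<longrightarrow> p {i, j} = c * (s i * s j)))"
  shows "\<bar>mu\<bar> < l"
proof -
  define A where "A = adj_matrix adj"
  define B where "B = signed_adj_matrix adj p"
  define a where "a = (\<chi> i. \<bar>v$i\<bar>)"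
  have pe: "p {i, j} = 1 \<or> p {i, j} = -1" if "adj i j" for i j
    using sig that unfolding is_signature_def graph_edges_def by blast
  have tm: "\<bar>B$i$j * v$j\<bar> = A$i$j * a$j" for i j
    using pe[of i j] by (auto simp: A_def B_def a_def abs_mult)
  have Bv: "(B *v v)$i = (\<Sum>j\<in>UNIV. B$i$j * v$j)" for i by (simp add: matrix_vector_mult_def)
  have Aa: "(A *v a)$i = (\<Sum>j\<in>UNIV. A$i$j * a$j)" for i by (simp add: matrix_vector_mult_def)
  have comp: "\<bar>(B *v v)$i\<bar> \<le> (A *v a)$i" for i
    unfolding Bv Aa tm[symmetric] by (rule sum_abs)
  have muv: "\<bar>(B *v v)$i\<bar> = \<bar>mu\<bar> * a$i" for i
    using ev by (simp add: B_def a_def abs_mult)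
  have anonneg: "a$i \<ge> 0" for i by (simp add: a_def)
  have aa: "a \<bullet> a = v \<bullet> v" by (simp add: inner_vec_def a_def)
  have vv: "v \<bullet> v > 0" using v0 by simp
  have "\<bar>mu\<bar> * (a \<bullet> a) = (\<Sum>i\<in>UNIV. a$i * \<bar>(B *v v)$i\<bar>)"
    by (simp add: inner_vec_def muv sum_distrib_left mult_ac)
  also have "\<dots> \<le> (\<Sum>i\<in>UNIV. a$i * (A *v a)$i)"
    by (rule sum_mono) (simp add: comp anonneg mult_left_mono)
  also have "\<dots> = a \<bullet> (A *v a)" by (simp add: inner_vec_def)
  finally have r1: "\<bar>mu\<bar> * (a \<bullet> a) \<le> a \<bullet> (A *v a)" .
  have r2: "a \<bullet> (A *v a) \<le> l * (a \<bullet> a)" using lmax A_def by simp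
  have "\<bar>mu\<bar> \<le> l" using r1 r2 aa vv by (metis mult_right_le_imp_le order_trans)
  moreover have "\<bar>mu\<bar> \<noteq> l"
  proof
    assume ml: "\<bar>mu\<bar> = l"
    have "a \<bullet> (A *v a) = l * (a \<bullet> a)" using r1 r2 ml by simp
    hence Aal: "A *v a = l *\<^sub>R a"
      by (intro perturb[OF symm_adj[OF sg, folded A_def]]) (use lmax A_def in auto)
    have ceq: "\<bar>(B *v v)$i\<bar> = (A *v a)$i" for i using Aal muv ml by simp
    have zero_prop: "a$j = 0" if "a$i = 0" "adj i j" for i j
    proof -
      have "(\<Sum>k\<in>UNIV. A$i$k * a$k) = 0" using Aal that(1) Aa[of i] by simp
      hence "A$i$j * a$j = 0" using sum_nonneg_eq_0_iff[of UNIV "\<lambda>k. A$i$k * a$k"] anonneg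
        by (simp add: A_def)
      thus ?thesis using that(2) by (simp add: A_def)
    qed
    have pos: "v$i \<noteq> 0" for i
    proof
      assume "v$i = 0"
      hence ai: "a$i = 0" by (simp add: a_def)
      have "a$k = 0" for k
      proof -
        have "adj\<^sup>*\<^sup>* i k" using conn by (simp add: graph_connected_def)
        thus ?thesis
        proof (induction rule: rtranclp_induct)
          case base thus ?case by (rule ai)
        next
          case (step y z) thus ?case using zero_prop by blast
        qed
      qed
      hence "v = 0" by (simp add: a_def vec_eq_iff)
      thus False using v0 by simp
    qed
    have sgn: "B$i$j * v$j * (mu * v$i) \<ge> 0" for i j
    proof -
      have "\<bar>\<Sum>j\<in>UNIV. B$i$j * v$j\<bar> = (\<Sum>j\<in>UNIV. \<bar>B$i$j * v$j\<bar>)"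
        using ceq[of i] unfolding Bv Aa tm by simp
      from sum_abs_eq_sign[OF _ this] have "B$i$j * v$j * (\<Sum>j\<in>UNIV. B$i$j * v$j) \<ge> 0" by simp
      moreover have "(\<Sum>j\<in>UNIV. B$i$j * v$j) = mu * v$i" using ev Bv[of i] by (simp add: vec_eq_iff B_def)
      ultimately show ?thesis by simp
    qed
    have "(A *v a)$i0 \<ge> A$i0$j0 * a$j0"
      unfolding Aa by (rule member_le_sum) (auto simp: A_def anonneg)
    hence "(A *v a)$i0 > 0" using pos[of j0] edge by (simp add: A_def a_def)
    hence mu0: "mu \<noteq> 0" using ceq muv by (metis abs_zero mult_zero_left order_less_irrefl)
    have "\<forall>i j. adj i j \<longrightarrow> p {i, j} = sgn mu * (sgn (v$i) * sgn (v$j))"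
    proof (intro allI impI)
      fix i j assume ij: "adj i j"
      show "p {i, j} = sgn mu * (sgn (v$i) * sgn (v$j))"
        using sign_lemma[OF pe[OF ij] pos[of i] pos[of j] mu0] sgn[of i j] ij by (simp add: B_def)
    qed
    moreover have "\<forall>x. sgn (v$x) = 1 \<or> sgn (v$x) = -1" using pos by (simp add: sgn_real_def)
    moreover have "sgn mu = 1 \<or> sgn mu = -1" using mu0 by (simp add: sgn_real_def)
    ultimately have "\<exists>s c. (\<forall>x. s x = 1 \<or> s x = -1) \<and> (c = 1 \<or> c = -1) \<and>
                  (\<forall>i j. adj i j \<longrightarrow> p {i, j} = c * (s i * s j))"
      by (intro exI[of _ "\<lambda>x. sgn (v$x)"] exI[of _ "sgn mu"]) simp
    thus False using nb by blast
  qed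
  ultimately show ?thesis by simp
qed



definition cycprod :: "('n set \<Rightarrow> real) \<Rightarrow> 'n list \<Rightarrow> real" where
  "cycprod p c = (\<Prod>i<length c. p {c!i, c!((i+1) mod length c)})"

lemma cyc_set: "cycle_edge_set c = (\<lambda>i. {c!i, c!((i+1) mod length c)}) ` {..<length c}"
  by (auto simp: cycle_edge_set_def)

lemma cyc_inj:
  assumes "is_cycle adj c"
  shows "inj_on (\<lambda>i. {c!i, c!((i+1) mod length c)}) {..<length c}"
proof (rule inj_onI)
  fix i j assume i: "i \<in> {..<length c}" and j: "j \<in> {..<length c}"
    and eq: "{c!i, c!((i+1) mod length c)} = {c!j, c!((j+1) mod length c)}"
  define n where "n = length c"
  have n3: "n \<ge> 3" and d: "distinct c" using assms by (auto simp: is_cycle_def n_def)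
  have i': "i < n" and j': "j < n" using i j by (auto simp: n_def)
  have mi: "(i+1) mod n < n" "(j+1) mod n < n" using n3 by auto
  have nth: "\<And>a b. a < n \<Longrightarrow> b < n \<Longrightarrow> c!a = c!b \<Longrightarrow> a = b"
    using d by (simp add: n_def nth_eq_iff_index_eq)
  from eq have "(c!i = c!j \<and> c!((i+1) mod n) = c!((j+1) mod n)) \<or> (c!i = c!((j+1) mod n) \<and> c!((i+1) mod n) = c!j)"
    by (auto simp: doubleton_eq_iff n_def)
  thus "i = j"
  proof
    assume "c!i = c!j \<and> c!((i+1) mod n) = c!((j+1) mod n)"
    thus ?thesis using nth i' j' by blast
  next
    assume h: "c!i = c!((j+1) mod n) \<and> c!((i+1) mod n) = c!j"
    hence a: "i = (j+1) mod n" and b: "(i+1) mod n = j" using nth i' j' mi by blast+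
    show ?thesis
    proof (cases "i + 1 < n")
      case True
      hence "j = i + 1" using b by simp
      hence "i = (i+2) mod n" using a by simp
      moreover have "(i+2) mod n = (if i + 2 < n then i + 2 else 0)"
        using True by (cases "i + 2 < n") (auto simp: mod_if)
      ultimately show ?thesis using n3 True by (auto split: if_splits)
    next
      case False
      hence "i = n - 1" using i' by simp
      hence "j = 0" using b n3 by simp
      hence "i = 1" using a n3 by simp
      thus ?thesis using \<open>i = n - 1\<close> n3 by simp
    qed
  qed
qed

lemma cyc_prod_edges:
  assumes "is_cycle adj c"
  shows "(\<Prod>e\<in>cycle_edge_set c. f e) = cycprod f c"
  unfolding cyc_set cycprod_def using prod.reindex[OF cyc_inj[OF assms], of f] by (simp add: o_def)

lemma cyc_card:
  assumes "is_cycle adj c"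
  shows "card (cycle_edge_set c) = length c"
  unfolding cyc_set using card_image[OF cyc_inj[OF assms]] by simp

lemma prod_shift:
  fixes n :: nat
  assumes "n > 0"
  shows "(\<Prod>i<n. g ((i+1) mod n)) = (\<Prod>i<n. (g i :: real))"
proof -
  obtain m where m: "n = Suc m" using assms by (cases n) auto
  have "(\<Prod>i<Suc m. g ((i+1) mod Suc m)) = (\<Prod>i<m. g ((i+1) mod Suc m)) * g ((m+1) mod Suc m)"
    by simp
  also have "(\<Prod>i<m. g ((i+1) mod Suc m)) = (\<Prod>i<m. g (Suc i))"
    by (rule prod.cong) auto
  also have "(\<Prod>i<Suc m. g i) = g 0 * (\<Prod>i<m. g (Suc i))" by (rule prod.lessThan_Suc_shift)
  ultimately show ?thesis using m by (simp add: mult_ac)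
qed

lemma prod_pm1_sq:
  assumes "\<forall>x\<in>S. f x = 1 \<or> f x = (-1::real)"
  shows "prod f S * prod f S = 1"
proof -
  have "prod f S * prod f S = prod (\<lambda>x. f x * f x) S" by (simp add: prod.distrib)
  also have "\<dots> = prod (\<lambda>x. 1) S" by (rule prod.cong) (use assms in auto)
  finally show ?thesis by simp
qed

lemma prod_pm1:
  assumes "\<forall>x\<in>S. f x = 1 \<or> f x = (-1::real)"
  shows "prod f S = 1 \<or> prod f S = -1"
proof -
  have "prod f S * prod f S = 1" by (rule prod_pm1_sq[OF assms])
  thus ?thesis by (metis mult_cancel_right1 square_eq_1_iff)
qed

lemma pm1_power: "c = 1 \<or> c = (-1::real) \<Longrightarrow> c ^ n = (if even n then 1 else c)"
  by auto

lemma bal_cyc: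
  assumes s: "\<forall>x. s x = 1 \<or> s x = (-1::real)"
    and b: "\<forall>i j. adj i j \<longrightarrow> p {i, j} = cc * (s i * s j)"
    and c: "is_cycle adj c"
  shows "cycprod p c = cc ^ length c"
proof -
  define n where "n = length c"
  have n0: "n > 0" using c by (auto simp: is_cycle_def n_def)
  have "cycprod p c = (\<Prod>i<n. cc * (s (c!i) * s (c!((i+1) mod n))))"
    unfolding cycprod_def n_def[symmetric]
    by (rule prod.cong) (use b c in \<open>auto simp: is_cycle_def n_def\<close>)
  also have "\<dots> = cc ^ n * ((\<Prod>i<n. s (c!i)) * (\<Prod>i<n. s (c!((i+1) mod n))))"
    by (simp add: prod.distrib)
  also have "(\<Prod>i<n. s (c!((i+1) mod n))) = (\<Prod>i<n. s (c!i))"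
    using prod_shift[OF n0, of "\<lambda>i. s (c!i)"] by simp
  also have "(\<Prod>i<n. s (c!i)) * (\<Prod>i<n. s (c!i)) = 1"
    by (rule prod_pm1_sq) (use s in auto)
  finally show ?thesis by (simp add: n_def)
qed

lemma rtranclp_sym:
  assumes "\<forall>x y. R x y \<longrightarrow> R y x" "R\<^sup>*\<^sup>* x y"
  shows "R\<^sup>*\<^sup>* y x"
  using assms(2)
proof (induction rule: rtranclp_induct)
  case base thus ?case by simp
next
  case (step y z)
  thus ?case using assms(1) by (meson converse_rtranclp_into_rtranclp)
qed

lemma simple_path:
  assumes "R\<^sup>*\<^sup>* u v"
  shows "\<exists>q. q \<noteq> [] \<and> hd q = u \<and> last q = v \<and> distinct q \<and> (\<forall>i. Suc i < length q \<longrightarrow> R (q!i) (q!Suc i))"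
  using assms
proof (induction rule: rtranclp_induct)
  case base
  show ?case by (intro exI[of _ "[u]"]) simp
next
  case (step y z)
  then obtain q where q: "q \<noteq> []" "hd q = u" "last q = y" "distinct q"
    "\<forall>i. Suc i < length q \<longrightarrow> R (q!i) (q!Suc i)" by blast
  show ?case
  proof (cases "z \<in> set q")
    case True
    then obtain k where k: "k < length q" "q!k = z" by (auto simp: in_set_conv_nth)
    define q' where "q' = take (Suc k) q"
    have l: "length q' = Suc k" using k by (simp add: q'_def)
    have "q' \<noteq> []" using l by auto
    moreover have "hd q' = u" using q k by (simp add: q'_def)
    moreover have "last q' = z"
    proof -
      have "last q' = q'!(length q' - 1)" by (rule last_conv_nth) (use l in auto)
      thus ?thesis using l k by (simp add: q'_def)
    qed
    moreover have "distinct q'" using q by (simp add: q'_def)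
    moreover have "\<forall>i. Suc i < length q' \<longrightarrow> R (q'!i) (q'!Suc i)" using q l k by (simp add: q'_def)
    ultimately show ?thesis by blast
  next
    case False
    define q' where "q' = q @ [z]"
    have "q' \<noteq> []" by (simp add: q'_def)
    moreover have "hd q' = u" using q by (simp add: q'_def)
    moreover have "last q' = z" by (simp add: q'_def)
    moreover have "distinct q'" using q False by (simp add: q'_def)
    moreover have "\<forall>i. Suc i < length q' \<longrightarrow> R (q'!i) (q'!Suc i)"
    proof (intro allI impI)
      fix i assume i: "Suc i < length q'"
      show "R (q'!i) (q'!Suc i)"
      proof (cases "Suc i < length q")
        case True thus ?thesis using q by (simp add: q'_def nth_append)
      next
        case False
        hence "Suc i = length q" using i by (simp add: q'_def)
        moreover have "q!i = y" using q \<open>Suc i = length q\<close> by (metis diff_Suc_1 last_conv_nth)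
        ultimately show ?thesis using step(2) by (simp add: q'_def nth_append)
      qed
    qed
    ultimately show ?thesis by blast
  qed
qed

lemma telescope:
  assumes "\<forall>i. t i = 1 \<or> t i = (-1::real)"
  shows "(\<Prod>i<m. t i * t (Suc i)) = t 0 * t m"
proof (induction m)
  case 0 show ?case using assms by (metis lessThan_0 mult_cancel_left1 prod.empty square_eq_1_iff)
next
  case (Suc m)
  have "t m * t m = 1" using assms by (metis mult_minus_left mult_1_left minus_minus)
  thus ?case using Suc by (simp add: mult_ac)
qed



lemma harary_aux:
  fixes adj :: "'n::finite \<Rightarrow> 'n \<Rightarrow> bool"
  assumes "card {(x, y). adj x y} = N" "simple_graph adj"
    "\<forall>i j. adj i j \<longrightarrow> p {i, j} = 1 \<or> p {i, j} = -1"
    "\<forall>c. is_cycle adj c \<longrightarrow> cycprod p c = 1"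
  shows "\<exists>s. (\<forall>x. s x = 1 \<or> s x = -1) \<and> (\<forall>i j. adj i j \<longrightarrow> p {i, j} = s i * s j)"
  using assms
proof (induction N arbitrary: adj rule: less_induct)
  case (less N adj)
  note sg = less.prems(2) and pe = less.prems(3) and cy = less.prems(4)
  have symA: "\<forall>x y. adj x y \<longrightarrow> adj y x" and irr: "\<And>x. \<not> adj x x"
    using sg by (auto simp: simple_graph_def)
  show ?case
  proof (cases "\<exists>u v. adj u v")
    case False
    thus ?thesis by (intro exI[of _ "\<lambda>_. 1"]) auto
  next
    case True
    then obtain u v where uv: "adj u v" by blast
    have uv': "u \<noteq> v" using uv irr by auto
    define adj' where "adj' = (\<lambda>x y. adj x y \<and> {x, y} \<noteq> {u, v})"
    have sg': "simple_graph adj'" using sg by (auto simp: simple_graph_def adj'_def insert_commute)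
    have sym': "\<forall>x y. adj' x y \<longrightarrow> adj' y x" using sg' by (auto simp: simple_graph_def)
    have sub: "{(x, y). adj' x y} \<subset> {(x, y). adj x y}"
      using uv by (auto simp: adj'_def)
    have "card {(x, y). adj' x y} < N"
      using psubset_card_mono[OF _ sub] less.prems(1) by simp
    moreover have "\<forall>i j. adj' i j \<longrightarrow> p {i, j} = 1 \<or> p {i, j} = -1" using pe by (auto simp: adj'_def)
    moreover have "\<forall>c. is_cycle adj' c \<longrightarrow> cycprod p c = 1"
      using cy by (auto simp: is_cycle_def adj'_def)
    ultimately obtain s where s: "\<forall>x. s x = 1 \<or> s x = -1" "\<forall>i j. adj' i j \<longrightarrow> p {i, j} = s i * s j"
      using less.IH sg' by blast
    have other: "adj' i j \<or> {i, j} = {u, v}" if "adj i j" for i j using that by (auto simp: adj'_def)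
    show ?thesis
    proof (cases "p {u, v} = s u * s v")
      case True
      show ?thesis
      proof (intro exI[of _ s] conjI allI impI)
        show "\<And>x. s x = 1 \<or> s x = -1" using s by blast
        fix i j assume ij: "adj i j"
        show "p {i, j} = s i * s j"
        proof (cases "{i, j} = {u, v}")
          case True
          hence "(i = u \<and> j = v) \<or> (i = v \<and> j = u)" by (auto simp: doubleton_eq_iff)
          thus ?thesis using \<open>p {u, v} = s u * s v\<close> by (auto simp: insert_commute mult_ac)
        next
          case False thus ?thesis using s(2) ij by (auto simp: adj'_def)
        qed
      qed
    next
      case False
      have "p {u, v} = 1 \<or> p {u, v} = -1" using pe uv by blast
      hence puv: "p {u, v} = - (s u * s v)" using False s(1)[rule_format, of u] s(1)[rule_format, of v]
        by auto
      show ?thesis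
      proof (cases "adj'\<^sup>*\<^sup>* u v")
        case True
        then obtain q where q: "q \<noteq> []" "hd q = u" "last q = v" "distinct q"
          "\<forall>i. Suc i < length q \<longrightarrow> adj' (q!i) (q!Suc i)" using simple_path by metis
        define n where "n = length q"
        have q0: "q!0 = u" using q by (simp add: hd_conv_nth)
        have qn: "q!(n-1) = v" using q by (simp add: last_conv_nth n_def)
        have n2: "n \<ge> 2"
        proof (rule ccontr)
          assume "\<not> n \<ge> 2"
          hence "n = 1" using q by (cases n) (auto simp: n_def)
          thus False using q0 qn uv' by simp
        qed
        have n3: "n \<ge> 3"
        proof (rule ccontr)
          assume "\<not> n \<ge> 3"
          hence "n = 2" using n2 by simp
          hence "adj' u v" using q(5)[rule_format, of 0] q0 qn by (simp add: n_def)
          thus False by (simp add: adj'_def)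
        qed
        obtain m where m: "n = Suc m" using n3 by (cases n) auto
        have cyc: "is_cycle adj q"
          unfolding is_cycle_def
        proof (intro conjI allI impI)
          show "3 \<le> length q" using n3 n_def by simp
          show "distinct q" by (rule q(4))
          fix i assume i: "i < length q"
          show "adj (q!i) (q!((i+1) mod length q))"
          proof (cases "Suc i < length q")
            case True thus ?thesis using q(5) by (simp add: adj'_def)
          next
            case False
            hence si: "Suc i = length q" using i by simp
            hence "i = n - 1" "(i+1) mod length q = 0" by (auto simp: n_def)
            thus ?thesis using q0 qn uv symA by (simp add: n_def)
          qed
        qed
        have c1: "cycprod p q = (\<Prod>i<m. p {q!i, q!((i+1) mod Suc m)}) * p {q!m, q!((m+1) mod Suc m)}"
          unfolding cycprod_def n_def[symmetric] m by (rule prod.lessThan_Suc)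
        have c2: "(\<Prod>i<m. p {q!i, q!((i+1) mod Suc m)}) = (\<Prod>i<m. s (q!i) * s (q!Suc i))"
        proof (rule prod.cong)
          fix i assume "i \<in> {..<m}"
          hence i: "i < m" by simp
          hence "(i+1) mod Suc m = Suc i" by simp
          moreover have "adj' (q!i) (q!Suc i)" using q(5) i m n_def by simp
          ultimately show "p {q!i, q!((i+1) mod Suc m)} = s (q!i) * s (q!Suc i)" using s(2) by simp
        qed simp
        have c3: "(\<Prod>i<m. s (q!i) * s (q!Suc i)) = s (q!0) * s (q!m)"
          by (rule telescope) (use s(1) in blast)
        have c4: "p {q!m, q!((m+1) mod Suc m)} = - (s u * s v)"
          using q0 qn m puv by (simp add: insert_commute)
        have "s u * s u = 1" "s v * s v = 1" using s(1) by (metis mult_minus_left mult_1_left minus_minus)+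
        hence "cycprod p q = -1" using c1 c2 c3 c4 q0 qn m by (simp add: algebra_simps)
        moreover have "cycprod p q = 1" using cy cyc by blast
        ultimately show ?thesis by simp
      next
        case False
        have nvu: "\<not> adj'\<^sup>*\<^sup>* v u" using False rtranclp_sym[OF sym'] by blast
        define s' where "s' x = (if adj'\<^sup>*\<^sup>* v x then - s x else s x)" for x
        show ?thesis
        proof (intro exI[of _ s'] conjI allI impI)
          show "\<And>x. s' x = 1 \<or> s' x = -1" using s(1) by (auto simp: s'_def)
          fix i j assume ij: "adj i j"
          show "p {i, j} = s' i * s' j"
          proof (cases "{i, j} = {u, v}")
            case True
            hence "(i = u \<and> j = v) \<or> (i = v \<and> j = u)" by (auto simp: doubleton_eq_iff)
            thus ?thesis using puv nvu by (auto simp: insert_commute s'_def)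
          next
            case False
            hence a: "adj' i j" "adj' j i" using ij symA by (auto simp: adj'_def insert_commute)
            have "adj'\<^sup>*\<^sup>* v i \<longleftrightarrow> adj'\<^sup>*\<^sup>* v j"
              using a by (meson rtranclp.rtrancl_into_rtrancl)
            thus ?thesis using s(2) a by (auto simp: s'_def)
          qed
        qed
      qed
    qed
  qed
qed

lemma harary:
  fixes adj :: "'n::finite \<Rightarrow> 'n \<Rightarrow> bool"
  assumes "simple_graph adj"
    "\<forall>i j. adj i j \<longrightarrow> p {i, j} = 1 \<or> p {i, j} = -1"
    "\<forall>c. is_cycle adj c \<longrightarrow> cycprod p c = 1"
  shows "\<exists>s. (\<forall>x. s x = 1 \<or> s x = -1) \<and> (\<forall>i j. adj i j \<longrightarrow> p {i, j} = s i * s j)"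
  using harary_aux[OF refl assms] .



lemma sig_pm: "is_signature adj p \<Longrightarrow> adj i j \<Longrightarrow> p {i, j} = 1 \<or> p {i, j} = -1"
  unfolding is_signature_def graph_edges_def by blast

lemma ces_in_cycles: "is_cycle adj c \<Longrightarrow> cycle_edge_set c \<in> graph_cycles adj"
  unfolding graph_cycles_def by blast

lemma ces_finite: "finite (cycle_edge_set c)"
  unfolding cyc_set by simp

lemma bal_or_anti:
  fixes adj :: "'n::finite \<Rightarrow> 'n \<Rightarrow> bool"
  assumes sg: "simple_graph adj" and h: "is_tree adj \<or> odd_unicyclic adj" and sig: "is_signature adj p"
  shows "\<exists>s cc. (\<forall>x. s x = 1 \<or> s x = -1) \<and> (cc = 1 \<or> cc = -1) \<and>
                  (\<forall>i j. adj i j \<longrightarrow> p {i, j} = cc * (s i * s j))"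
proof -
  have pe: "\<forall>i j. adj i j \<longrightarrow> p {i, j} = 1 \<or> p {i, j} = -1" using sig_pm[OF sig] by blast
  show ?thesis
  proof (cases "is_tree adj")
    case True
    hence "\<forall>c. is_cycle adj c \<longrightarrow> cycprod p c = 1"
      using ces_in_cycles by (fastforce simp: is_tree_def)
    then obtain s where "(\<forall>x. s x = 1 \<or> s x = -1) \<and> (\<forall>i j. adj i j \<longrightarrow> p {i, j} = s i * s j)"
      using harary[OF sg pe] by blast
    thus ?thesis by (intro exI[of _ s] exI[of _ 1]) simp
  next
    case False
    hence "odd_unicyclic adj" using h by blast
    then obtain C where C: "graph_cycles adj = {C}" "odd (card C)" by (auto simp: odd_unicyclic_def)
    have cC: "cycle_edge_set c = C" if "is_cycle adj c" for c using ces_in_cycles[OF that] C by auto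
    obtain c0 where c0: "is_cycle adj c0" using C by (auto simp: graph_cycles_def)
    define P where "P = (\<Prod>e\<in>C. p e)"
    have cp: "cycprod f c = (\<Prod>e\<in>C. f e)" if "is_cycle adj c" for c f
      using cyc_prod_edges[OF that] cC[OF that] by simp
    have "\<forall>e\<in>C. p e = 1 \<or> p e = -1"
    proof
      fix e assume "e \<in> C"
      then obtain i where "i < length c0" "e = {c0!i, c0!((i+1) mod length c0)}"
        using cC[OF c0] by (auto simp: cycle_edge_set_def)
      moreover have "adj (c0!i) (c0!((i+1) mod length c0))" using c0 calculation(1) by (simp add: is_cycle_def)
      ultimately show "p e = 1 \<or> p e = -1" using pe by blast
    qed
    hence "P = 1 \<or> P = -1" unfolding P_def by (rule prod_pm1)
    thus ?thesis
    proof
      assume P1: "P = 1"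
      hence "\<forall>c. is_cycle adj c \<longrightarrow> cycprod p c = 1" using cp P_def by simp
      then obtain s where "(\<forall>x. s x = 1 \<or> s x = -1) \<and> (\<forall>i j. adj i j \<longrightarrow> p {i, j} = s i * s j)"
        using harary[OF sg pe] by blast
      thus ?thesis by (intro exI[of _ s] exI[of _ 1]) simp
    next
      assume P1: "P = -1"
      define p' where "p' e = - p e" for e
      have pe': "\<forall>i j. adj i j \<longrightarrow> p' {i, j} = 1 \<or> p' {i, j} = -1" using pe by (auto simp: p'_def)
      have "(\<Prod>e\<in>C. p' e) = (\<Prod>e\<in>C. (-1) * p e)" by (simp add: p'_def)
      also have "\<dots> = (\<Prod>e\<in>C. (-1::real)) * (\<Prod>e\<in>C. p e)" by (rule prod.distrib)
      also have "\<dots> = (-1) ^ card C * P" by (simp add: P_def)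
      also have "\<dots> = 1" using C(2) P1 by simp
      finally have "\<forall>c. is_cycle adj c \<longrightarrow> cycprod p' c = 1" using cp by simp
      then obtain s where s: "(\<forall>x. s x = 1 \<or> s x = -1) \<and> (\<forall>i j. adj i j \<longrightarrow> p' {i, j} = s i * s j)"
        using harary[OF sg pe'] by blast
      have "\<forall>i j. adj i j \<longrightarrow> p {i, j} = -1 * (s i * s j)"
        using s unfolding p'_def by (metis minus_minus mult_minus1)
      thus ?thesis using s by blast
    qed
  qed
qed

lemma prod_single:
  assumes "finite F"
  shows "(\<Prod>x\<in>F. (if x = e then -1 else 1::real)) = (if e \<in> F then -1 else 1)"
proof (cases "e \<in> F")
  case True
  have "(\<Prod>x\<in>F. (if x = e then -1 else 1::real)) = (if e = e then -1 else 1) * (\<Prod>x\<in>F - {e}. (if x = e then -1 else 1::real))"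
    by (rule prod.remove[OF assms True])
  also have "(\<Prod>x\<in>F - {e}. (if x = e then -1 else 1::real)) = 1" by (rule prod.neutral) auto
  finally show ?thesis using True by simp
next
  case False
  thus ?thesis by (simp add: prod.neutral) (rule prod.neutral, auto)
qed

lemma claim:
  fixes adj :: "'n::finite \<Rightarrow> 'n \<Rightarrow> bool"
  assumes c1: "is_cycle adj c1" and c2: "is_cycle adj c2" and e: "e \<in> cycle_edge_set c1"
    and alt: "(e \<notin> cycle_edge_set c2 \<and> odd (length c2)) \<or> (c2 = c1 \<and> even (length c1))"
  shows "\<not> (\<exists>s cc. (\<forall>x. s x = 1 \<or> s x = -1) \<and> (cc = 1 \<or> cc = -1) \<and>
                  (\<forall>i j. adj i j \<longrightarrow> (\<lambda>x. if x = e then -1 else 1::real) {i, j} = cc * (s i * s j)))"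
proof
  define p where "p = (\<lambda>x. if x = e then -1 else 1::real)"
  assume "\<exists>s cc. (\<forall>x. s x = 1 \<or> s x = -1) \<and> (cc = 1 \<or> cc = -1) \<and>
                  (\<forall>i j. adj i j \<longrightarrow> (\<lambda>x. if x = e then -1 else 1::real) {i, j} = cc * (s i * s j))"
  then obtain s cc where s: "\<forall>x. s x = 1 \<or> s x = -1" and cc: "cc = 1 \<or> cc = -1"
    and b: "\<forall>i j. adj i j \<longrightarrow> p {i, j} = cc * (s i * s j)" unfolding p_def by blast
  have pr: "cycprod p c = (if e \<in> cycle_edge_set c then -1 else 1)" if "is_cycle adj c" for c
    using cyc_prod_edges[OF that, of p] prod_single[OF ces_finite[of c], of e] by (simp add: p_def)
  have q1: "cc ^ length c1 = -1" using bal_cyc[OF s b c1] pr[OF c1] e by simp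
  from alt show False
  proof
    assume a: "e \<notin> cycle_edge_set c2 \<and> odd (length c2)"
    have "cc ^ length c2 = 1" using bal_cyc[OF s b c2] pr[OF c2] a by simp
    hence "cc = 1" using a pm1_power[OF cc] by simp
    thus False using q1 by simp
  next
    assume a: "c2 = c1 \<and> even (length c1)"
    thus False using q1 pm1_power[OF cc] by simp
  qed
qed

lemma nonbal_exists:
  fixes adj :: "'n::finite \<Rightarrow> 'n \<Rightarrow> bool"
  assumes sg: "simple_graph adj" and conn: "graph_connected adj"
    and nt: "\<not> is_tree adj" and nu: "\<not> odd_unicyclic adj"
  shows "\<exists>p. is_signature adj p \<and> (\<exists>i j. adj i j) \<and>
     \<not> (\<exists>s cc. (\<forall>x. s x = 1 \<or> s x = -1) \<and> (cc = 1 \<or> cc = -1) \<and>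
                  (\<forall>i j. adj i j \<longrightarrow> p {i, j} = cc * (s i * s j)))"
proof -
  have "graph_cycles adj \<noteq> {}" using nt conn by (simp add: is_tree_def)
  then obtain c where c: "is_cycle adj c" by (auto simp: graph_cycles_def)
  have l3: "length c \<ge> 3" using c by (simp add: is_cycle_def)
  have edge: "adj (c!0) (c!1)" using c l3 by (auto simp: is_cycle_def dest!: spec[of _ 0])
  have sig: "is_signature adj (\<lambda>x. if x = e then -1 else 1::real)" for e
    by (simp add: is_signature_def)
  have "\<exists>e c1. is_cycle adj c1 \<and> e \<in> cycle_edge_set c1 \<and> (\<exists>c2. is_cycle adj c2 \<and>
     ((e \<notin> cycle_edge_set c2 \<and> odd (length c2)) \<or> (c2 = c1 \<and> even (length c1))))"
  proof (cases "\<exists>c'. is_cycle adj c' \<and> even (length c')")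
    case True
    then obtain c' where c': "is_cycle adj c'" "even (length c')" by blast
    have "length c' \<ge> 3" using c' by (simp add: is_cycle_def)
    hence "{c'!0, c'!1} \<in> cycle_edge_set c'"
      unfolding cycle_edge_set_def by (intro CollectI exI[of _ 0]) auto
    thus ?thesis using c' by blast
  next
    case False
    hence odd: "odd (length c')" if "is_cycle adj c'" for c' using that by blast
    define C1 where "C1 = cycle_edge_set c"
    have C1in: "C1 \<in> graph_cycles adj" using ces_in_cycles[OF c] C1_def by simp
    have "graph_cycles adj \<noteq> {C1}"
    proof
      assume "graph_cycles adj = {C1}"
      moreover have "odd (card C1)" using cyc_card[OF c] odd[OF c] C1_def by simp
      ultimately show False using nu conn by (auto simp: odd_unicyclic_def)
    qed
    then obtain C2 where C2: "C2 \<in> graph_cycles adj" "C2 \<noteq> C1" using C1in by blast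
    then obtain c2 where c2: "is_cycle adj c2" "C2 = cycle_edge_set c2" by (auto simp: graph_cycles_def)
    show ?thesis
    proof (cases "C1 \<subseteq> C2")
      case False
      then obtain e where "e \<in> C1" "e \<notin> C2" by blast
      thus ?thesis using c c2 odd[OF c2(1)] C1_def by blast
    next
      case True
      then obtain e where "e \<in> C2" "e \<notin> C1" using C2(2) by blast
      thus ?thesis using c c2 odd[OF c] C1_def by blast
    qed
  qed
  then obtain e c1 c2 where "is_cycle adj c1" "e \<in> cycle_edge_set c1" "is_cycle adj c2"
     "(e \<notin> cycle_edge_set c2 \<and> odd (length c2)) \<or> (c2 = c1 \<and> even (length c1))" by blast
  from claim[OF this(1,3,2,4)] sig edge show ?thesis by blast
qed

lemma conj_eig:
  assumes s: "\<forall>x. s x = 1 \<or> s x = (-1::real)" and cc: "cc = 1 \<or> cc = (-1::real)"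
    and M: "\<forall>i j. M$i$j = cc * (s i * s j) * N$i$j" and ev: "is_eigenvalue N nu"
  shows "is_eigenvalue M (cc * nu)"
proof -
  obtain v where v: "v \<noteq> 0" "N *v v = nu *\<^sub>R v" using ev by (auto simp: is_eigenvalue_def)
  have ss: "s x * s x = 1" for x using s by (metis mult_minus_left mult_1_left minus_minus)
  define w where "w = (\<chi> i. s i * v$i)"
  have "w \<noteq> 0"
  proof
    assume "w = 0"
    have "v$i = 0" for i
    proof -
      have "s i * v$i = 0" using \<open>w = 0\<close> by (simp add: w_def vec_eq_iff)
      moreover have "s i \<noteq> 0" using ss[of i] by auto
      ultimately show ?thesis by simp
    qed
    thus False using v(1) by (simp add: vec_eq_iff)
  qed
  moreover have "M *v w = (cc * nu) *\<^sub>R w"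
  proof -
    have "(M *v w)$i = ((cc * nu) *\<^sub>R w)$i" for i
    proof -
      have "(M *v w)$i = (\<Sum>j\<in>UNIV. cc * (s i * s j) * N$i$j * (s j * v$j))"
        using M by (simp add: matrix_vector_mult_def w_def)
      also have "\<dots> = (\<Sum>j\<in>UNIV. (cc * s i) * (N$i$j * v$j))"
      proof (rule sum.cong[OF refl])
        fix j
        have "cc * (s i * s j) * N$i$j * (s j * v$j) = (cc * s i) * (N$i$j * v$j) * (s j * s j)"
          by (simp add: mult_ac)
        thus "cc * (s i * s j) * N$i$j * (s j * v$j) = (cc * s i) * (N$i$j * v$j)" using ss[of j] by simp
      qed
      also have "\<dots> = (cc * s i) * (N *v v)$i" by (simp add: matrix_vector_mult_def sum_distrib_left)
      also have "\<dots> = ((cc * nu) *\<^sub>R w)$i" using v(2) by (simp add: w_def)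
      finally show ?thesis .
    qed
    thus ?thesis by (simp add: vec_eq_iff)
  qed
  ultimately show ?thesis by (auto simp: is_eigenvalue_def)
qed



lemma switch_spec:
  fixes adj :: "'n::finite \<Rightarrow> 'n \<Rightarrow> bool"
  assumes s: "\<forall>x. s x = 1 \<or> s x = -1" and cc: "cc = 1 \<or> cc = -1"
    and b: "\<forall>i j. adj i j \<longrightarrow> p {i, j} = cc * (s i * s j)"
  shows "spec_rad (signed_adj_matrix adj p) = spec_rad (adj_matrix adj)"
proof -
  define A where "A = adj_matrix adj"
  define B where "B = signed_adj_matrix adj p"
  have ss: "s x * s x = 1" for x using s by (metis mult_minus_left mult_1_left minus_minus)
  have c2: "cc * cc = 1" using cc by auto
  have BA: "\<forall>i j. B$i$j = cc * (s i * s j) * A$i$j" using b by (simp add: A_def B_def)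
  have AB: "\<forall>i j. A$i$j = cc * (s i * s j) * B$i$j"
  proof (intro allI)
    fix i j
    have "cc * (s i * s j) * B$i$j = (cc * cc) * (s i * s i) * (s j * s j) * A$i$j"
      using BA by (simp add: mult_ac)
    thus "A$i$j = cc * (s i * s j) * B$i$j" using c2 ss by simp
  qed
  have "abs ` {mu. is_eigenvalue B mu} = abs ` {mu. is_eigenvalue A mu}"
  proof (intro set_eqI iffI)
    fix y assume "y \<in> abs ` {mu. is_eigenvalue B mu}"
    then obtain mu where mu: "is_eigenvalue B mu" "y = \<bar>mu\<bar>" by blast
    have "is_eigenvalue A (cc * mu)" by (rule conj_eig[OF s cc AB mu(1)])
    moreover have "\<bar>cc * mu\<bar> = y" using cc mu(2) by auto
    ultimately show "y \<in> abs ` {mu. is_eigenvalue A mu}" by force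
  next
    fix y assume "y \<in> abs ` {mu. is_eigenvalue A mu}"
    then obtain mu where mu: "is_eigenvalue A mu" "y = \<bar>mu\<bar>" by blast
    have "is_eigenvalue B (cc * mu)" by (rule conj_eig[OF s cc BA mu(1)])
    moreover have "\<bar>cc * mu\<bar> = y" using cc mu(2) by auto
    ultimately show "y \<in> abs ` {mu. is_eigenvalue B mu}" by force
  qed
  thus ?thesis by (simp add: spec_rad_def A_def B_def)
qed

theorem mainTheorem2:
  fixes adj :: "'n::finite \<Rightarrow> 'n \<Rightarrow> bool"
  assumes "simple_graph adj"
    and "graph_connected adj"
  shows "(\<not> (\<exists>\<pi>. is_signature adj \<pi> \<and>
              spec_rad (signed_adj_matrix adj \<pi>) < spec_rad (adj_matrix adj)))
         \<longleftrightarrow> (is_tree adj \<or> odd_unicyclic adj)"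
proof
  assume h: "is_tree adj \<or> odd_unicyclic adj"
  show "\<not> (\<exists>\<pi>. is_signature adj \<pi> \<and>
              spec_rad (signed_adj_matrix adj \<pi>) < spec_rad (adj_matrix adj))"
  proof
    assume "\<exists>\<pi>. is_signature adj \<pi> \<and> spec_rad (signed_adj_matrix adj \<pi>) < spec_rad (adj_matrix adj)"
    then obtain p where p: "is_signature adj p" "spec_rad (signed_adj_matrix adj p) < spec_rad (adj_matrix adj)"
      by blast
    obtain s cc where "\<forall>x. s x = 1 \<or> s x = -1" "cc = 1 \<or> cc = -1"
       "\<forall>i j. adj i j \<longrightarrow> p {i, j} = cc * (s i * s j)"
      using bal_or_anti[OF assms(1) h p(1)] by blast
    from switch_spec[OF this] p(2) show False by simp
  qed
next
  assume h: "\<not> (\<exists>\<pi>. is_signature adj \<pi> \<and>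
              spec_rad (signed_adj_matrix adj \<pi>) < spec_rad (adj_matrix adj))"
  show "is_tree adj \<or> odd_unicyclic adj"
  proof (rule ccontr)
    assume "\<not> (is_tree adj \<or> odd_unicyclic adj)"
    then obtain p where p: "is_signature adj p" and ed: "\<exists>i j. adj i j"
      and nb: "\<not> (\<exists>s cc. (\<forall>x. s x = 1 \<or> s x = -1) \<and> (cc = 1 \<or> cc = -1) \<and>
                  (\<forall>i j. adj i j \<longrightarrow> p {i, j} = cc * (s i * s j)))"
      using nonbal_exists[OF assms] by blast
    obtain i0 j0 where e: "adj i0 j0" using ed by blast
    define A where "A = adj_matrix adj"
    define B where "B = signed_adj_matrix adj p"
    obtain l x where lx: "x \<noteq> 0" "A *v x = l *\<^sub>R x" "\<forall>z. z \<bullet> (A *v z) \<le> l * (z \<bullet> z)"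
      using rayleigh_max[OF symm_adj[OF assms(1)]] A_def by blast
    have lt: "\<bar>mu\<bar> < l" if ev: "is_eigenvalue B mu" for mu
    proof -
      obtain v where "v \<noteq> 0" "B *v v = mu *\<^sub>R v" using ev by (auto simp: is_eigenvalue_def)
      thus ?thesis using strict[OF assms p e, of l v mu] lx(3) nb by (simp add: A_def B_def)
    qed
    have finB: "finite {mu. is_eigenvalue B mu}" using eig_finite[OF symm_sadj[OF assms(1)]] B_def by simp
    have finA: "finite {mu. is_eigenvalue A mu}" using eig_finite[OF symm_adj[OF assms(1)]] A_def by simp
    obtain l' y where "y \<noteq> 0" "B *v y = l' *\<^sub>R y"
      using rayleigh_max[OF symm_sadj[OF assms(1)]] B_def by blast
    hence neB: "{mu. is_eigenvalue B mu} \<noteq> {}" by (auto simp: is_eigenvalue_def)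
    have "spec_rad B \<in> abs ` {mu. is_eigenvalue B mu}"
      unfolding spec_rad_def by (rule Max_in) (use finB neB in auto)
    hence sB: "spec_rad B < l" using lt by auto
    have lA: "l \<in> {mu. is_eigenvalue A mu}" using lx by (auto simp: is_eigenvalue_def)
    have "\<bar>l\<bar> \<le> spec_rad A"
      unfolding spec_rad_def by (rule Max_ge) (use finA lA in auto)
    hence "spec_rad B < spec_rad A" using sB by linarith
    thus False using h p by (auto simp: A_def B_def)
  qed
qed

end
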